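(* Let $d\ge 1$ and let $\mathcal S:\mathbb C^d\to\mathcal H$ be a map into a real Hilbert space $\mathcal H$ satisfying: (i) $\mathcal S$ is real-linear: $\mathcal S(a|\phi\rangle+b|\psi\rangle)=a\,\mathcal S(|\phi\rangle)+b\,\mathcal S(|\psi\rangle)$ for all $|\phi\rangle,|\psi\rangle\in\mathbb C^d$, $a,b\in\mathbb R$; (ii) there is a real representation $g$ of $\mathrm{SO}(2)$ on $\mathcal H$ such that $\mathcal S(e^{i\alpha}|\psi\rangle)=g(R_\alpha)\,\mathcal S(|\psi\rangle)$ for all $|\psi\rangle$ and all $\alpha\in\mathbb R$, where $R_\alpha\in\mathrm{SO}(2)$ is the rotation by angle $\alpha$; (iii) if $\langle\phi|\psi\rangle=0$ then $\mathcal S(|\phi\rangle)^T\mathcal S(|\psi\rangle)=0$, and if $\langle\phi|\psi\rangle=1$ then $\mathcal S(|\phi\rangle)^T\mathcal S(|\psi\rangle)=1$; (iv) $\mathcal S$ is surjective onto $\mathcal H$. Then $\mathcal H\cong\mathbb R^d\otimes\mathbb R^2$ (as real Hilbert spaces), and there exist an orthonormal basis $\{|e_j\rangle\}_{j=1}^d$ of $\mathbb C^d$ and an orthonormal basis $\{|\tilde e_j\rangle\otimes|0\rangle_F,\ |\tilde e_j\rangle\otimes|1\rangle_F\}_{j=1}^d$ of $\mathcal H\cong\mathbb R^d\otimes\mathbb R^2$ such that for all $c_1,\dots,c_d\in\mathbb C$, $$\mathcal S\Big(\sum_{j=1}^d c_j|e_j\rangle\Big)=\sum_{j=1}^d\big[\mathrm{Re}(c_j)\,|\tilde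 e_j\rangle\otimes|0\rangle_F+\mathrm{Im}(c_j)\,|\tilde e_j\rangle\otimes|1\rangle_F\big].$$
   Context: $\{|0\rangle_F,|1\rangle_F\}$ denotes the standard orthonormal basis of the second factor $\mathbb R^2$ (the "flag"). For real vectors, $v^T w$ is the real inner product. *)

theory Defs
  imports "HOL-Analysis.Analysis"
begin

definition braket :: "complex ^ 'd \<Rightarrow> complex ^ 'd \<Rightarrow> complex" where
  "braket \<phi> \<psi> = (\<Sum>j\<in>UNIV. cnj (\<phi> $ j) * \<psi> $ j)"

definition complex_onb :: "('d::finite \<Rightarrow> complex ^ 'd) \<Rightarrow> bool" where
  "complex_onb e \<longleftrightarrow>
     (\<forall>i j. braket (e i) (e j) = (if i = j then 1 else 0)) \<and>
     (\<forall>\<psi>. \<exists>c. \<psi> = (\<Sum>j\<in>UNIV. c j *s e j))"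

definition real_onb :: "('i \<Rightarrow> 'a::real_inner) \<Rightarrow> bool" where
  "real_onb v \<longleftrightarrow>
     (\<forall>i j. inner (v i) (v j) = (if i = j then 1 else 0)) \<and> span (range v) = UNIV"

definition SO2 :: "(real ^ 2 ^ 2) set" where
  "SO2 = {R. orthogonal_matrix R \<and> det R = 1}"

definition rot :: "real \<Rightarrow> real ^ 2 ^ 2" where
  "rot \<alpha> = vector [vector [cos \<alpha>, - sin \<alpha>], vector [sin \<alpha>, cos \<alpha>]]"

definition SO2_rep :: "(real ^ 2 ^ 2 \<Rightarrow> 'h::real_vector \<Rightarrow> 'h) \<Rightarrow> bool" where
  "SO2_rep g \<longleftrightarrow>
     (\<forall>R\<in>SO2. linear (g R)) \<and> g (mat 1) = id \<and>
     (\<forall>R\<in>SO2. \<forall>Q\<in>SO2. g (R ** Q) = g R \<circ> g Q)"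

text \<open>R^d (x) R^2 modelled as real^2^'d (d x 2 real matrices, Frobenius inner product),
  with elementary tensors v (x) w.\<close>
definition tprod :: "real ^ 'd \<Rightarrow> real ^ 2 \<Rightarrow> real ^ 2 ^ 'd" where
  "tprod v w = (\<chi> i. \<chi> k. v $ i * w $ k)"

definition flag0 :: "real ^ 2" where "flag0 = axis 1 1"
definition flag1 :: "real ^ 2" where "flag1 = axis 2 1"

definition hilbert_iso :: "('a::real_inner \<Rightarrow> 'b::real_inner) \<Rightarrow> bool" where
  "hilbert_iso U \<longleftrightarrow> linear U \<and> bij U \<and> (\<forall>x y. inner (U x) (U y) = inner x y)"

end

theory Submission
  imports Defs
begin

definition PP :: "complex ^ 'd \<Rightarrow> complex ^ 'd \<Rightarrow> real" where
  "PP \<phi> \<psi> = (\<Sum>i\<in>UNIV. Re (\<phi>$i) * Re (\<psi>$i) + Im (\<phi>$i) * Im (\<psi>$i))"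

definition TT :: "complex ^ 'd \<Rightarrow> real ^ 2 ^ 'd" where
  "TT \<psi> = (\<chi> i k. if k = 1 then Re (\<psi>$i) else Im (\<psi>$i))"

lemma sum_2: "(\<Sum>k\<in>(UNIV::2 set). f k) = f 1 + f 2"
  by (simp add: UNIV_2)

lemma inner_TT: "inner (TT \<phi>) (TT \<psi>) = PP \<phi> \<psi>"
  by (simp add: TT_def PP_def inner_vec_def sum_2)

lemma PP_add: "PP (\<phi> + \<phi>') \<psi> = PP \<phi> \<psi> + PP \<phi>' \<psi>"
  by (simp add: PP_def sum.distrib[symmetric] algebra_simps)

lemma PP_sym: "PP \<phi> \<psi> = PP \<psi> \<phi>"
  by (simp add: PP_def mult.commute)

lemma PP_pos: "\<phi> \<noteq> 0 \<Longrightarrow> PP \<phi> \<phi> > 0"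
proof -
  assume "\<phi> \<noteq> 0"
  then obtain j where j: "\<phi>$j \<noteq> 0" by (metis vec_eq_iff zero_index)
  have "Re (\<phi>$j) * Re (\<phi>$j) + Im (\<phi>$j) * Im (\<phi>$j) > 0"
    using j by (simp add: sum_squares_gt_zero_iff complex_eq_iff)
  moreover have "\<forall>i. Re (\<phi>$i) * Re (\<phi>$i) + Im (\<phi>$i) * Im (\<phi>$i) \<ge> 0" by simp
  ultimately show ?thesis unfolding PP_def
    by (metis (no_types, lifting) UNIV_I finite sum_pos2)
qed

lemma braket_self: "braket \<phi> (r *\<^sub>R \<phi>) = complex_of_real (r * PP \<phi> \<phi>)"
proof -
  have "\<And>z. cnj z * (r *\<^sub>R z) = complex_of_real (r * (Re z * Re z + Im z * Im z))"
    by (simp add: complex_eq_iff algebra_simps)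
  then show ?thesis by (simp add: braket_def PP_def sum_distrib_left)
qed

lemma TT_expand: "TT (\<chi> j. c j) =
  (\<Sum>j\<in>UNIV. Re (c j) *\<^sub>R tprod (axis j 1) flag0 + Im (c j) *\<^sub>R tprod (axis j 1) flag1)"
proof (subst vec_eq_iff, intro allI, subst vec_eq_iff, intro allI)
  fix i :: 'a and k :: 2
  have ax: "axis j (1::real) $ i = (if j = i then 1 else 0)" for j by (simp add: axis_def)
  have "(\<Sum>j\<in>UNIV. Re (c j) *\<^sub>R tprod (axis j 1) flag0 + Im (c j) *\<^sub>R tprod (axis j 1) flag1) $ i $ k
     = (\<Sum>j\<in>UNIV. Re (c j) * (axis j 1 $ i * flag0 $ k) + Im (c j) * (axis j 1 $ i * flag1 $ k))"
    by (simp add: sum_component tprod_def)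
  also have "\<dots> = (\<Sum>j\<in>UNIV. if j = i then Re (c j) * flag0 $ k + Im (c j) * flag1 $ k else 0)"
    by (rule sum.cong) (auto simp: ax)
  also have "\<dots> = Re (c i) * flag0 $ k + Im (c i) * flag1 $ k" by (simp add: sum.delta')
  also have "\<dots> = TT (\<chi> j. c j) $ i $ k"
    using exhaust_2[of k] by (auto simp: TT_def flag0_def flag1_def axis_def)
  finally show "TT (\<chi> j. c j) $ i $ k =
    (\<Sum>j\<in>UNIV. Re (c j) *\<^sub>R tprod (axis j 1) flag0 + Im (c j) *\<^sub>R tprod (axis j 1) flag1) $ i $ k"
    by simp
qed

theorem proposition1:
  fixes S :: "complex ^ 'd \<Rightarrow> 'h::{real_inner, complete_space}"
    and g :: "real ^ 2 ^ 2 \<Rightarrow> 'h \<Rightarrow> 'h"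
  assumes lin: "\<And>\<phi> \<psi> (a::real) (b::real). S (a *\<^sub>R \<phi> + b *\<^sub>R \<psi>) = a *\<^sub>R S \<phi> + b *\<^sub>R S \<psi>"
    and rep: "SO2_rep g"
    and equiv: "\<And>\<psi> \<alpha>. S (exp (\<i> * complex_of_real \<alpha>) *s \<psi>) = g (rot \<alpha>) (S \<psi>)"
    and orth0: "\<And>\<phi> \<psi>. braket \<phi> \<psi> = 0 \<Longrightarrow> inner (S \<phi>) (S \<psi>) = 0"
    and orth1: "\<And>\<phi> \<psi>. braket \<phi> \<psi> = 1 \<Longrightarrow> inner (S \<phi>) (S \<psi>) = 1"
    and surj: "surj S"
  shows "\<exists>U :: 'h \<Rightarrow> real ^ 2 ^ 'd. \<exists>e :: 'd \<Rightarrow> complex ^ 'd. \<exists>et :: 'd \<Rightarrow> real ^ 'd.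
           hilbert_iso U \<and> complex_onb e \<and> real_onb et \<and>
           (\<forall>c :: 'd \<Rightarrow> complex.
              U (S (\<Sum>j\<in>UNIV. c j *s e j)) =
              (\<Sum>j\<in>UNIV. Re (c j) *\<^sub>R tprod (et j) flag0 + Im (c j) *\<^sub>R tprod (et j) flag1))"
proof -
  have S0: "S 0 = 0" using lin[of 0 0 0 0] by simp
  have Sadd: "S (x + y) = S x + S y" for x y using lin[of 1 x 1 y] by simp
  have Ssc: "S (r *\<^sub>R x) = r *\<^sub>R S x" for r x using lin[of r x 0 x] by simp
  have linS: "linear S" by (rule linearI) (use Sadd Ssc in auto)
  have normS: "inner (S \<phi>) (S \<phi>) = PP \<phi> \<phi>" for \<phi>
  proof (cases "\<phi> = 0")
    case True then show ?thesis by (simp add: S0 PP_def)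
  next
    case False
    hence p: "PP \<phi> \<phi> > 0" by (rule PP_pos)
    have "braket \<phi> ((1 / PP \<phi> \<phi>) *\<^sub>R \<phi>) = 1" using p by (simp add: braket_self)
    hence "inner (S \<phi>) (S ((1 / PP \<phi> \<phi>) *\<^sub>R \<phi>)) = 1" by (rule orth1)
    hence h: "(1 / PP \<phi> \<phi>) * inner (S \<phi>) (S \<phi>) = 1" by (simp only: Ssc inner_scaleR_right)
    have "inner (S \<phi>) (S \<phi>) = PP \<phi> \<phi> * ((1 / PP \<phi> \<phi>) * inner (S \<phi>) (S \<phi>))"
      using p by simp
    thus ?thesis using h by simp
  qed
  have innS: "inner (S \<phi>) (S \<psi>) = PP \<phi> \<psi>" for \<phi> \<psi>
  proof -
    have "inner (S (\<phi> + \<psi>)) (S (\<phi> + \<psi>)) = PP (\<phi> + \<psi>) (\<phi> + \<psi>)" by (rule normS)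
    moreover have "inner (S (\<phi> + \<psi>)) (S (\<phi> + \<psi>)) =
        inner (S \<phi>) (S \<phi>) + 2 * inner (S \<phi>) (S \<psi>) + inner (S \<psi>) (S \<psi>)"
      unfolding Sadd inner_add_left inner_add_right using inner_commute[of "S \<psi>" "S \<phi>"] by simp
    moreover have "PP (\<phi> + \<psi>) (\<phi> + \<psi>) = PP \<phi> \<phi> + 2 * PP \<phi> \<psi> + PP \<psi> \<psi>"
      using PP_add[of \<phi> \<psi> "\<phi> + \<psi>"] PP_sym[of \<phi> "\<phi> + \<psi>"] PP_sym[of \<psi> "\<phi> + \<psi>"]
        PP_add[of \<phi> \<psi> \<phi>] PP_add[of \<phi> \<psi> \<psi>] PP_sym[of \<psi> \<phi>] by linarith
    ultimately show ?thesis using normS[of \<phi>] normS[of \<psi>] by linarith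
  qed
  have injS: "inj S"
  proof (rule injI)
    fix x y assume "S x = S y"
    hence "S (x - y) = 0" using Sadd[of "x - y" y] by simp
    hence "PP (x - y) (x - y) = 0" using normS[of "x - y"] by simp
    thus "x = y" using PP_pos[of "x - y"] by (cases "x - y = 0") auto
  qed
  have bijS: "bij S" using injS surj by (simp add: bij_def)
  define Si where "Si = inv S"
  have SSi: "S (Si y) = y" for y using surj unfolding Si_def by (simp add: surj_f_inv_f)
  have SiS: "Si (S x) = x" for x using injS unfolding Si_def by simp
  have linSi: "linear Si"
  proof (rule linearI)
    fix x y
    have "Si (x + y) = Si (S (Si x) + S (Si y))" by (simp only: SSi)
    also have "\<dots> = Si (S (Si x + Si y))" by (simp only: Sadd)
    also have "\<dots> = Si x + Si y" by (rule SiS)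
    finally show "Si (x + y) = Si x + Si y" .
  next
    fix r :: real and x
    have "Si (r *\<^sub>R x) = Si (r *\<^sub>R S (Si x))" by (simp only: SSi)
    also have "\<dots> = Si (S (r *\<^sub>R Si x))" by (simp only: Ssc)
    also have "\<dots> = r *\<^sub>R Si x" by (rule SiS)
    finally show "Si (r *\<^sub>R x) = r *\<^sub>R Si x" .
  qed
  have bijSi: "bij Si" unfolding Si_def by (rule bij_imp_bij_inv[OF bijS])
  have linT: "linear TT"
    by (rule linearI) (auto simp: TT_def vec_eq_iff)
  have injT: "inj TT"
  proof (rule injI)
    fix x y assume "TT x = TT y"
    hence "\<forall>i. (TT x)$i$1 = (TT y)$i$1 \<and> (TT x)$i$2 = (TT y)$i$2" by simp
    thus "x = y" by (simp add: TT_def vec_eq_iff complex_eq_iff)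
  qed
  have surjT: "surj TT"
  proof -
    have "TT (\<chi> i. Complex (y$i$1) (y$i$2)) = y" for y
      by (simp add: TT_def vec_eq_iff forall_2)
    thus ?thesis by (rule surjI)
  qed
  define U where "U = TT \<circ> Si"
  have isoU: "hilbert_iso U"
    unfolding hilbert_iso_def U_def
  proof (intro conjI allI)
    show "linear (TT \<circ> Si)" using linT linSi by (rule linear_compose[rotated])
    have bijT: "bij TT" using injT surjT by (simp add: bij_def)
    show "bij (TT \<circ> Si)" by (rule bij_comp[OF bijSi bijT])
    fix x y show "inner ((TT \<circ> Si) x) ((TT \<circ> Si) y) = inner x y"
    proof -
      have "inner (TT (Si x)) (TT (Si y)) = PP (Si x) (Si y)" by (rule inner_TT)
      also have "\<dots> = inner (S (Si x)) (S (Si y))" by (rule innS[symmetric])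
      also have "\<dots> = inner x y" by (simp only: SSi)
      finally show ?thesis by (simp only: comp_apply)
    qed
  qed
  define e :: "'d \<Rightarrow> complex ^ 'd" where "e = (\<lambda>j. axis j 1)"
  define et :: "'d \<Rightarrow> real ^ 'd" where "et = (\<lambda>j. axis j 1)"
  have onb: "complex_onb e"
    unfolding complex_onb_def e_def
  proof (intro conjI allI)
    fix i j :: 'd
    show "braket (axis i 1) (axis j 1) = (if i = j then 1 else (0::complex))"
    proof -
      have "cnj (axis i 1 $ k) * axis j 1 $ k = (if k = i then (if i = j then 1 else 0) else (0::complex))" for k
        by (simp add: axis_def)
      hence "braket (axis i 1) (axis j 1) = (\<Sum>k\<in>UNIV. if k = i then (if i = j then 1 else 0) else (0::complex))"
        unfolding braket_def by (rule sum.cong[OF refl])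
      thus ?thesis by (simp add: sum.delta)
    qed
  next
    fix \<psi> :: "complex ^ 'd"
    show "\<exists>c. \<psi> = (\<Sum>j\<in>UNIV. c j *s axis j 1)"
      by (rule exI[of _ "\<lambda>j. \<psi>$j"]) (simp add: basis_expansion)
  qed
  have ronb: "real_onb et"
    unfolding real_onb_def et_def
  proof (intro conjI allI)
    fix i j :: 'd
    show "inner (axis i (1::real)) (axis j 1) = (if i = j then 1 else 0)"
      by (simp add: inner_axis_axis)
  next
    have "range (\<lambda>j::'d. axis j (1::real)) = Basis" by (auto simp: Basis_vec_def)
    thus "span (range (\<lambda>j::'d. axis j (1::real))) = UNIV" by simp
  qed
  have main: "U (S (\<Sum>j\<in>UNIV. c j *s e j)) =
              (\<Sum>j\<in>UNIV. Re (c j) *\<^sub>R tprod (et j) flag0 + Im (c j) *\<^sub>R tprod (et j) flag1)" for c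
  proof -
    have "(\<Sum>j\<in>UNIV. c j *s e j) = (\<chi> j. c j)"
      using basis_expansion[of "\<chi> j. c j"] by (simp add: e_def)
    hence "U (S (\<Sum>j\<in>UNIV. c j *s e j)) = TT (\<chi> j. c j)" by (simp add: U_def SiS)
    also have "\<dots> = (\<Sum>j\<in>UNIV. Re (c j) *\<^sub>R tprod (et j) flag0 + Im (c j) *\<^sub>R tprod (et j) flag1)"
      unfolding et_def by (rule TT_expand)
    finally show ?thesis .
  qed
  show ?thesis using isoU onb ronb main by blast
qed

end
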